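(* Let $T$ be a tree rooted at a vertex $v$, let $S$ be a dominating set of $T$, let $A\subseteq a_1(S)$, let $N=N(A)\cap N_1(S)$, and set $S'=(S\setminus A)\cup N$. Suppose every vertex of $A$ has the same depth in $T$. Then (i) $|S'|\ge |S|$; (ii) every vertex of $A$, and every descendant of a vertex of $A$, is dominated by $S'$ (i.e. lies in $S'$ or is adjacent to a vertex of $S'$). If in addition $S'$ is a dominating set and every vertex of $N$ is a child of some vertex of $A$, then (iii) no vertex of $N$ is adjacent to any other vertex of $S'$, and hence $N\subseteq a(S')$; (iv) every vertex $x\in a(S)$ which lies in $S'\setminus a(S')$ is a grandchild of some vertex of $N$, and the parent of $x$ is not in $S'$.
   Context: A dominating set of a graph $G=(V,E)$ is a set $S\subseteq V$ such that every vertex is in $S$ or adjacent to a vertex of $S$. $N(v)$, $N[v]=N(v)\cup\{v\}$ are open/closed neighbourhoods, and for a set $A$, $N(A)=\bigcup_{a\in A}N(a)$. For a dominating set $S$: $a(S)=\{u\in S: S\setminus\{u\}\text{ is not dominating}\}$ (critical vertices; vertices of $S\setminus a(S)$ are called supported); $N_1(S)=\{u\in V\setminus S: |N[u]\cap S|=1\}$; $N_2(S)=\{u\in V\setminus S: |N[u]\cap S|\ge 2\}$; $a_1(S)=\{u\in a(S): N[u]\cap N_1(S)\ne\emptyset\}$; $a_2(S)=\{u\in a(S): N[u]\cap N_1(S)=\emptyset\}$. In a tree rooted at $v$, the depth of a vertex is its distance to $v$; $x$ is a descendant of $y$ if $y$ lies on the path from $x$ to $v$; child/grandchild means a descendant at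 distance one/two, and parent is the inverse of child. *)

theory Defs
  imports Main
begin

definition graph :: "'a set \<Rightarrow> ('a \<Rightarrow> 'a \<Rightarrow> bool) \<Rightarrow> bool" where
  "graph V E \<longleftrightarrow> finite V \<and> (\<forall>x y. E x y \<longrightarrow> x \<in> V \<and> y \<in> V)
      \<and> (\<forall>x y. E x y \<longrightarrow> E y x) \<and> (\<forall>x. \<not> E x x)"

definition gpath :: "('a \<Rightarrow> 'a \<Rightarrow> bool) \<Rightarrow> 'a list \<Rightarrow> 'a \<Rightarrow> 'a \<Rightarrow> bool" where
  "gpath E xs u w \<longleftrightarrow> xs \<noteq> [] \<and> distinct xs \<and> hd xs = u \<and> last xs = w
      \<and> (\<forall>i. Suc i < length xs \<longrightarrow> E (xs ! i) (xs ! Suc i))"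

definition connected :: "'a set \<Rightarrow> ('a \<Rightarrow> 'a \<Rightarrow> bool) \<Rightarrow> bool" where
  "connected V E \<longleftrightarrow> (\<forall>u\<in>V. \<forall>w\<in>V. \<exists>xs. gpath E xs u w)"

definition has_cycle :: "('a \<Rightarrow> 'a \<Rightarrow> bool) \<Rightarrow> bool" where
  "has_cycle E \<longleftrightarrow> (\<exists>xs. 3 \<le> length xs \<and> gpath E xs (hd xs) (last xs) \<and> E (last xs) (hd xs))"

definition tree :: "'a set \<Rightarrow> ('a \<Rightarrow> 'a \<Rightarrow> bool) \<Rightarrow> bool" where
  "tree V E \<longleftrightarrow> graph V E \<and> V \<noteq> {} \<and> connected V E \<and> \<not> has_cycle E"

definition gdist :: "('a \<Rightarrow> 'a \<Rightarrow> bool) \<Rightarrow> 'a \<Rightarrow> 'a \<Rightarrow> nat" where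
  "gdist E u w = (LEAST n. \<exists>xs. gpath E xs u w \<and> length xs = Suc n)"

definition depth :: "('a \<Rightarrow> 'a \<Rightarrow> bool) \<Rightarrow> 'a \<Rightarrow> 'a \<Rightarrow> nat" where
  "depth E r x = gdist E x r"

definition descendant :: "'a set \<Rightarrow> ('a \<Rightarrow> 'a \<Rightarrow> bool) \<Rightarrow> 'a \<Rightarrow> 'a \<Rightarrow> 'a \<Rightarrow> bool" where
  "descendant V E r x y \<longleftrightarrow> x \<in> V \<and> (\<exists>xs. gpath E xs x r \<and> y \<in> set xs)"

definition child :: "'a set \<Rightarrow> ('a \<Rightarrow> 'a \<Rightarrow> bool) \<Rightarrow> 'a \<Rightarrow> 'a \<Rightarrow> 'a \<Rightarrow> bool" where
  "child V E r x y \<longleftrightarrow> descendant V E r x y \<and> gdist E x y = 1"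

definition grandchild :: "'a set \<Rightarrow> ('a \<Rightarrow> 'a \<Rightarrow> bool) \<Rightarrow> 'a \<Rightarrow> 'a \<Rightarrow> 'a \<Rightarrow> bool" where
  "grandchild V E r x y \<longleftrightarrow> descendant V E r x y \<and> gdist E x y = 2"

definition parent :: "'a set \<Rightarrow> ('a \<Rightarrow> 'a \<Rightarrow> bool) \<Rightarrow> 'a \<Rightarrow> 'a \<Rightarrow> 'a \<Rightarrow> bool" where
  "parent V E r p x \<longleftrightarrow> child V E r x p"

definition nbh :: "'a set \<Rightarrow> ('a \<Rightarrow> 'a \<Rightarrow> bool) \<Rightarrow> 'a \<Rightarrow> 'a set" where
  "nbh V E x = {u\<in>V. E x u}"

definition cnbh :: "'a set \<Rightarrow> ('a \<Rightarrow> 'a \<Rightarrow> bool) \<Rightarrow> 'a \<Rightarrow> 'a set" where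
  "cnbh V E x = insert x (nbh V E x)"

definition nbh_set :: "'a set \<Rightarrow> ('a \<Rightarrow> 'a \<Rightarrow> bool) \<Rightarrow> 'a set \<Rightarrow> 'a set" where
  "nbh_set V E A = (\<Union>a\<in>A. nbh V E a)"

definition dominated_by :: "('a \<Rightarrow> 'a \<Rightarrow> bool) \<Rightarrow> 'a set \<Rightarrow> 'a \<Rightarrow> bool" where
  "dominated_by E S u \<longleftrightarrow> u \<in> S \<or> (\<exists>s\<in>S. E u s)"

definition dominating :: "'a set \<Rightarrow> ('a \<Rightarrow> 'a \<Rightarrow> bool) \<Rightarrow> 'a set \<Rightarrow> bool" where
  "dominating V E S \<longleftrightarrow> S \<subseteq> V \<and> (\<forall>u\<in>V. dominated_by E S u)"

text \<open>a(S): critical vertices.\<close>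
definition crit :: "'a set \<Rightarrow> ('a \<Rightarrow> 'a \<Rightarrow> bool) \<Rightarrow> 'a set \<Rightarrow> 'a set" where
  "crit V E S = {u\<in>S. \<not> dominating V E (S - {u})}"

definition N1 :: "'a set \<Rightarrow> ('a \<Rightarrow> 'a \<Rightarrow> bool) \<Rightarrow> 'a set \<Rightarrow> 'a set" where
  "N1 V E S = {u\<in>V - S. card (cnbh V E u \<inter> S) = 1}"

text \<open>a_1(S).\<close>
definition crit1 :: "'a set \<Rightarrow> ('a \<Rightarrow> 'a \<Rightarrow> bool) \<Rightarrow> 'a set \<Rightarrow> 'a set" where
  "crit1 V E S = {u\<in>crit V E S. cnbh V E u \<inter> N1 V E S \<noteq> {}}"

end

theory Submission
  imports Defs
begin

fun walk :: "('a \<Rightarrow> 'a \<Rightarrow> bool) \<Rightarrow> 'a list \<Rightarrow> bool" where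
  "walk E [] = True"
| "walk E [x] = True"
| "walk E (x # y # xs) = (E x y \<and> walk E (y # xs))"

lemma walk_Cons: "walk E (x # xs) \<longleftrightarrow> walk E xs \<and> (xs \<noteq> [] \<longrightarrow> E x (hd xs))"
  by (cases xs) auto

lemma walk_nth: "walk E xs \<longleftrightarrow> (\<forall>i. Suc i < length xs \<longrightarrow> E (xs!i) (xs!Suc i))"
proof (induction E xs rule: walk.induct)
  case (3 E x y xs)
  show ?case
  proof
    assume "walk E (x # y # xs)"
    then show "\<forall>i. Suc i < length (x # y # xs) \<longrightarrow> E ((x # y # xs) ! i) ((x # y # xs) ! Suc i)"
      using 3 by (auto simp: nth_Cons split: nat.splits)
  next
    assume h: "\<forall>i. Suc i < length (x # y # xs) \<longrightarrow> E ((x # y # xs) ! i) ((x # y # xs) ! Suc i)"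
    have "E x y" using h[rule_format, of 0] by simp
    moreover have "\<forall>i. Suc i < length (y # xs) \<longrightarrow> E ((y # xs) ! i) ((y # xs) ! Suc i)"
      using h by (metis Suc_less_eq length_Cons nth_Cons_Suc)
    ultimately show "walk E (x # y # xs)" using 3 by simp
  qed
qed auto

lemma gpath_walk: "gpath E xs u w \<longleftrightarrow> xs \<noteq> [] \<and> distinct xs \<and> hd xs = u \<and> last xs = w \<and> walk E xs"
  by (simp add: gpath_def walk_nth)

lemma walk_append: "walk E (xs @ ys) \<longleftrightarrow> walk E xs \<and> walk E ys \<and> (xs \<noteq> [] \<longrightarrow> ys \<noteq> [] \<longrightarrow> E (last xs) (hd ys))"
  by (induction xs) (auto simp: walk_Cons)

lemma walk_rev: "(\<And>x y. E x y \<Longrightarrow> E y x) \<Longrightarrow> walk E (rev xs) = walk E xs"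
  by (induction xs) (auto simp: walk_append walk_Cons last_rev)

lemma walk_concat: "walk E xs \<Longrightarrow> walk E ys \<Longrightarrow> xs \<noteq> [] \<Longrightarrow> ys \<noteq> [] \<Longrightarrow> last xs = hd ys
  \<Longrightarrow> walk E (xs @ tl ys)"
  by (cases ys) (auto simp: walk_append walk_Cons)

lemma walk_to_path: "walk E xs \<Longrightarrow> xs \<noteq> [] \<Longrightarrow> \<exists>ys. gpath E ys (hd xs) (last xs) \<and> length ys \<le> length xs"
proof (induction "length xs" arbitrary: xs rule: less_induct)
  case less
  show ?case
  proof (cases "distinct xs")
    case True
    then show ?thesis using less.prems by (auto simp: gpath_walk)
  next
    case False
    then obtain a v b c where xs: "xs = a @ [v] @ b @ [v] @ c" using not_distinct_decomp by blast
    let ?zs = "a @ [v] @ c"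
    have w1: "walk E (a @ [v])" using less.prems(1) unfolding xs
      by (metis append.assoc walk_append)
    have w2: "walk E ([v] @ c)" using less.prems(1) unfolding xs
      by (metis append.assoc walk_append)
    have "walk E ?zs" using w1 w2
      by (metis append_Cons append_Nil append_is_Nil_conv hd_append2 last_snoc list.sel(1) not_Cons_self2 walk_append walk_Cons append.assoc)
    moreover have "hd ?zs = hd xs" unfolding xs by (cases a) auto
    moreover have "last ?zs = last xs" unfolding xs by (cases c) auto
    moreover have "length ?zs < length xs" unfolding xs by simp
    ultimately show ?thesis using less.hyps[of ?zs] by fastforce
  qed
qed

lemma gdist_le: "walk E xs \<Longrightarrow> hd xs = u \<Longrightarrow> last xs = w \<Longrightarrow> xs \<noteq> [] \<Longrightarrow> gdist E u w \<le> length xs - 1"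
proof -
  assume a: "walk E xs" "hd xs = u" "last xs = w" "xs \<noteq> []"
  then obtain ys where ys: "gpath E ys u w" "length ys \<le> length xs" using walk_to_path by blast
  then have "ys \<noteq> []" by (simp add: gpath_def)
  then have "gdist E u w \<le> length ys - 1" unfolding gdist_def
    by (intro Least_le) (use ys in auto)
  then show ?thesis using ys by simp
qed

lemma gdist_path: "\<exists>xs. gpath E xs u w \<Longrightarrow> \<exists>xs. gpath E xs u w \<and> length xs = Suc (gdist E u w)"
proof -
  assume "\<exists>xs. gpath E xs u w"
  then obtain xs where "gpath E xs u w" by blast
  then have "\<exists>n xs. gpath E xs u w \<and> length xs = Suc n"
    by (metis Suc_pred gpath_def length_greater_0_conv)
  then show ?thesis unfolding gdist_def by (rule LeastI_ex)
qed

locale rtree =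
  fixes V :: "'a set" and E :: "'a \<Rightarrow> 'a \<Rightarrow> bool" and r :: 'a
  assumes tree: "tree V E" and root: "r \<in> V"
begin

lemma finV: "finite V" using tree by (simp add: tree_def graph_def)
lemma EV: "E x y \<Longrightarrow> x \<in> V \<and> y \<in> V" using tree by (simp add: tree_def graph_def)
lemma Esym: "E x y \<Longrightarrow> E y x" using tree by (simp add: tree_def graph_def)
lemma Eirr: "\<not> E x x" using tree by (simp add: tree_def graph_def)
lemma conn: "u \<in> V \<Longrightarrow> w \<in> V \<Longrightarrow> \<exists>xs. gpath E xs u w"
  using tree by (simp add: tree_def connected_def)
lemma nocyc: "\<not> has_cycle E" using tree by (simp add: tree_def)

lemma path_in_V: assumes "gpath E xs u w" "u \<in> V" shows "set xs \<subseteq> V"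
proof
  fix x assume "x \<in> set xs"
  then obtain i where i: "i < length xs" "xs ! i = x" by (auto simp: in_set_conv_nth)
  show "x \<in> V"
  proof (cases i)
    case 0 then show ?thesis using assms i by (auto simp: gpath_def hd_conv_nth)
  next
    case (Suc j)
    then have "E (xs ! j) (xs ! i)" using assms(1) i by (auto simp: gpath_def)
    then show ?thesis using EV i by blast
  qed
qed

lemma dpath: "x \<in> V \<Longrightarrow> \<exists>P. gpath E P x r \<and> length P = Suc (depth E r x)"
  unfolding depth_def by (rule gdist_path[OF conn[OF _ root]])

lemma depth_r: "depth E r r = 0"
  using gdist_le[of E "[r]" r r] by (simp add: depth_def)

lemma gdist_tri: assumes "u \<in> V" "v \<in> V" "w \<in> V"
  shows "gdist E u w \<le> gdist E u v + gdist E v w"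
proof -
  obtain P where P: "gpath E P u v" "length P = Suc (gdist E u v)" using gdist_path[OF conn[OF assms(1,2)]] by blast
  obtain Q where Q: "gpath E Q v w" "length Q = Suc (gdist E v w)" using gdist_path[OF conn[OF assms(2,3)]] by blast
  have "walk E (P @ tl Q)" using P Q by (intro walk_concat) (auto simp: gpath_walk)
  moreover have "hd (P @ tl Q) = u" using P by (auto simp: gpath_walk)
  moreover have "last (P @ tl Q) = w" using P Q
    by (cases Q) (auto simp: gpath_walk)
  moreover have "P @ tl Q \<noteq> []" using P by (auto simp: gpath_walk)
  ultimately have "gdist E u w \<le> length (P @ tl Q) - 1" by (rule gdist_le)
  then show ?thesis using P Q by simp
qed

lemma adj_le: "E x y \<Longrightarrow> depth E r x \<le> Suc (depth E r y)"
proof -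
  assume e: "E x y"
  have "gdist E x y \<le> 1" using gdist_le[of E "[x,y]" x y] e by simp
  then show ?thesis using gdist_tri[of x y r] EV[OF e] root by (simp add: depth_def)
qed

lemma sp_depth:
  assumes P: "gpath E P x r" "length P = Suc (depth E r x)" and x: "x \<in> V" and k: "k < length P"
  shows "depth E r (P ! k) + k = depth E r x"
proof -
  have Pk: "P ! k \<in> V" using path_in_V[OF P(1) x] k by auto
  have wP: "walk E P" using P by (simp add: gpath_walk)
  have "walk E (drop k P)" using wP walk_append[of E "take k P" "drop k P"] by simp
  moreover have "hd (drop k P) = P ! k" using k by (simp add: hd_drop_conv_nth)
  moreover have "last (drop k P) = r" using P k by (simp add: gpath_walk)
  moreover have "drop k P \<noteq> []" using k by simp
  ultimately have "gdist E (P ! k) r \<le> length (drop k P) - 1" by (rule gdist_le)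
  then have le1: "depth E r (P ! k) + k \<le> depth E r x" using P(2) k by (simp add: depth_def)
  have tk: "take (Suc k) P = take k P @ [P ! k]" using k by (simp add: take_Suc_conv_app_nth)
  have "walk E (take (Suc k) P)" using wP walk_append[of E "take (Suc k) P" "drop (Suc k) P"] by simp
  moreover have "hd (take (Suc k) P) = x" using P k by (auto simp: gpath_walk)
  moreover have "last (take (Suc k) P) = P ! k" using tk by simp
  moreover have "take (Suc k) P \<noteq> []" using k by (cases P) auto
  ultimately have "gdist E x (P ! k) \<le> length (take (Suc k) P) - 1" by (rule gdist_le)
  then have "gdist E x (P ! k) \<le> k" using k by simp
  then have "depth E r x \<le> k + depth E r (P ! k)"
    using gdist_tri[OF x Pk root] by (simp add: depth_def)
  then show ?thesis using le1 by simp
qed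


lemma meet:
  assumes x: "x \<in> V" and y: "y \<in> V" and d: "depth E r x = depth E r y"
    and P: "gpath E P x r" "length P = Suc (depth E r x)"
    and Q: "gpath E Q y r" "length Q = Suc (depth E r y)"
  shows "\<exists>i. i < length P \<and> i < length Q \<and> P ! i = Q ! i \<and> (\<forall>k<i. P ! k \<notin> set Q)
      \<and> (\<forall>k<i. Q ! k \<notin> set P)"
proof -
  let ?p = "\<lambda>i. i < length P \<and> P ! i \<in> set Q"
  have "P ! (length P - 1) = r" using P by (metis gpath_walk last_conv_nth)
  moreover have "r \<in> set Q" using Q by (metis gpath_walk last_in_set)
  moreover have "length P - 1 < length P" using P by (simp add: gpath_walk)
  ultimately have "?p (length P - 1)" by simp
  then have ex: "\<exists>i. ?p i" by blast
  define i where "i = (LEAST i. ?p i)"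
  have pi: "?p i" unfolding i_def using ex by (rule LeastI_ex)
  have mini: "\<And>k. k < i \<Longrightarrow> \<not> ?p k" unfolding i_def by (rule not_less_Least)
  obtain j where j: "j < length Q" "Q ! j = P ! i" using pi by (auto simp: in_set_conv_nth)
  have "depth E r (P ! i) + i = depth E r x" using sp_depth[OF P x] pi by blast
  moreover have "depth E r (Q ! j) + j = depth E r y" using sp_depth[OF Q y] j by blast
  ultimately have ij: "i = j" using d j by simp
  have "\<forall>k<i. Q ! k \<notin> set P"
  proof (intro allI impI notI)
    fix k assume k: "k < i" and "Q ! k \<in> set P"
    then obtain m where m: "m < length P" "P ! m = Q ! k" by (auto simp: in_set_conv_nth)
    have "depth E r (P ! m) + m = depth E r x" using sp_depth[OF P x] m by blast
    moreover have "depth E r (Q ! k) + k = depth E r y" using sp_depth[OF Q y] k ij j by auto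
    ultimately have "m = k" using d m by simp
    have "k < length Q" using k ij j by simp
    then have "Q ! k \<in> set Q" by simp
    then show False using mini[of m] \<open>m = k\<close> k m by simp
  qed
  moreover have "\<forall>k<i. P ! k \<notin> set Q" using mini pi by auto
  moreover have "i < length Q" "P ! i = Q ! i" using ij j by auto
  ultimately show ?thesis using pi by blast
qed

lemma cycle:
  assumes P: "gpath E P a z" and Q: "gpath E Q b z" and int: "set P \<inter> set Q = {z}"
    and e: "E b a" and len: "4 \<le> length P + length Q"
  shows False
proof -
  define C where "C = P @ rev (butlast Q)"
  have Qne: "Q \<noteq> []" using Q by (simp add: gpath_walk)
  have Qeq: "Q = butlast Q @ [z]" using Q by (metis append_butlast_last_id gpath_walk)
  have zn: "z \<notin> set (butlast Q)" using Q Qeq by (metis distinct_append gpath_walk disjoint_iff list.set_intros(1) set_append)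
  have "distinct (butlast Q)" using Q by (simp add: gpath_walk distinct_butlast)
  moreover have "set P \<inter> set (butlast Q) = {}" using int zn in_set_butlastD by fastforce
  ultimately have dC: "distinct C" using P by (simp add: C_def gpath_walk)
  have "rev Q = z # rev (butlast Q)" using Qeq by (metis rev_eq_Cons_iff rev_rev_ident)
  then have "C = P @ tl (rev Q)" by (metis C_def list.sel(3))
  moreover have "walk E (P @ tl (rev Q))" using P Q Qne \<open>rev Q = z # rev (butlast Q)\<close>
    by (intro walk_concat) (auto simp: gpath_walk walk_rev Esym hd_rev)
  ultimately have wC: "walk E C" by simp
  have hC: "hd C = a" using P by (simp add: C_def gpath_walk)
  have lC: "last C = b"
  proof (cases "butlast Q = []")
    case True
    then have "Q = [z]" using Qeq by simp
    then show ?thesis using P Q True by (simp add: C_def gpath_walk)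
  next
    case False
    then have "last C = hd (butlast Q)" by (simp add: C_def last_rev)
    also have "\<dots> = hd Q" using False Qeq by (metis hd_append2)
    finally show ?thesis using Q by (simp add: gpath_walk)
  qed
  have "1 \<le> length Q" using Qne by (cases Q) auto
  then have "length C = length P + length Q - 1" by (simp add: C_def)
  then have "3 \<le> length C" using len by simp
  moreover have "C \<noteq> []" using P by (simp add: C_def gpath_walk)
  moreover have "gpath E C (hd C) (last C)" using dC wC \<open>C \<noteq> []\<close> by (simp add: gpath_walk)
  moreover have "E (last C) (hd C)" using hC lC e by simp
  ultimately have "has_cycle E" unfolding has_cycle_def by blast
  then show False using nocyc by simp
qed

lemma take_path:
  assumes P: "gpath E P x w" and i: "i < length P"
  shows "gpath E (take (Suc i) P) x (P ! i)"
proof -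
  have "walk E (take (Suc i) P)" using P walk_append[of E "take (Suc i) P" "drop (Suc i) P"]
    by (simp add: gpath_walk)
  moreover have "take (Suc i) P = take i P @ [P ! i]" using i by (simp add: take_Suc_conv_app_nth)
  moreover have "distinct (take (Suc i) P)" using P by (simp add: gpath_walk)
  moreover have "hd (take (Suc i) P) = x" using P i by (cases P) (auto simp: gpath_walk)
  ultimately show ?thesis by (simp add: gpath_walk)
qed

lemma set_take_nth: "v \<in> set (take (Suc i) P) \<Longrightarrow> \<exists>k\<le>i. k < length P \<and> P ! k = v"
  by (auto simp: in_set_conv_nth) (metis less_Suc_eq_le)

lemma adj_ne: assumes e: "E x y" shows "depth E r x \<noteq> depth E r y"
proof
  assume d: "depth E r x = depth E r y"
  have x: "x \<in> V" and y: "y \<in> V" using EV e by auto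
  obtain P where P: "gpath E P x r" "length P = Suc (depth E r x)" using dpath x by blast
  obtain Q where Q: "gpath E Q y r" "length Q = Suc (depth E r y)" using dpath y by blast
  obtain i where i: "i < length P" "i < length Q" "P ! i = Q ! i" "\<forall>k<i. P ! k \<notin> set Q"
    "\<forall>k<i. Q ! k \<notin> set P" using meet[OF x y d P Q] by blast
  have P': "gpath E (take (Suc i) P) x (P ! i)" using take_path[OF P(1) i(1)] .
  have Q': "gpath E (take (Suc i) Q) y (P ! i)" using take_path[OF Q(1) i(2)] i(3) by simp
  have "set (take (Suc i) P) \<inter> set (take (Suc i) Q) \<subseteq> {P ! i}"
  proof
    fix v assume v: "v \<in> set (take (Suc i) P) \<inter> set (take (Suc i) Q)"
    then have v1: "v \<in> set (take (Suc i) P)" and v2: "v \<in> set Q" by (auto dest: in_set_takeD)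
    obtain k where k: "k \<le> i" "k < length P" "P ! k = v" using set_take_nth[OF v1] by blast
    have "\<not> k < i" using i(4) v2 k(3) by auto
    then have "k = i" using k(1) by simp
    then show "v \<in> {P ! i}" using k by simp
  qed
  moreover have "P ! i \<in> set (take (Suc i) P)" by (metis P' gpath_walk last_in_set)
  moreover have "P ! i \<in> set (take (Suc i) Q)" by (metis Q' gpath_walk last_in_set)
  ultimately have int: "set (take (Suc i) P) \<inter> set (take (Suc i) Q) = {P ! i}" by blast
  have "i \<noteq> 0"
  proof
    assume "i = 0"
    then have "x = y" using i P Q by (auto simp: gpath_walk hd_conv_nth)
    then show False using e Eirr by simp
  qed
  then have "4 \<le> length (take (Suc i) P) + length (take (Suc i) Q)" using i by simp
  then show False using cycle[OF P' Q' int Esym[OF e]] by simp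
qed

lemma adj_depth: "E x y \<Longrightarrow> depth E r x = Suc (depth E r y) \<or> depth E r y = Suc (depth E r x)"
  using adj_le[of x y] adj_le[of y x] adj_ne[of x y] Esym[of x y] by linarith

lemma unique_lower:
  assumes ep: "E x p" and eq: "E x q" and dp: "depth E r x = Suc (depth E r p)"
    and dq: "depth E r x = Suc (depth E r q)"
  shows "p = q"
proof (rule ccontr)
  assume pq: "p \<noteq> q"
  have p: "p \<in> V" and q: "q \<in> V" and x: "x \<in> V" using EV ep eq by auto
  have d: "depth E r p = depth E r q" using dp dq by simp
  obtain P where P: "gpath E P p r" "length P = Suc (depth E r p)" using dpath p by blast
  obtain Q where Q: "gpath E Q q r" "length Q = Suc (depth E r q)" using dpath q by blast
  obtain i where i: "i < length P" "i < length Q" "P ! i = Q ! i" "\<forall>k<i. P ! k \<notin> set Q"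
    "\<forall>k<i. Q ! k \<notin> set P" using meet[OF p q d P Q] by blast
  have xP: "x \<notin> set P"
  proof
    assume "x \<in> set P"
    then obtain k where "k < length P" "P ! k = x" by (auto simp: in_set_conv_nth)
    then show False using sp_depth[OF P p] dp by force
  qed
  have xQ: "x \<notin> set Q"
  proof
    assume "x \<in> set Q"
    then obtain k where "k < length Q" "Q ! k = x" by (auto simp: in_set_conv_nth)
    then show False using sp_depth[OF Q q] dq by force
  qed
  have P0: "gpath E (take (Suc i) P) p (P ! i)" using take_path[OF P(1) i(1)] .
  have xP0: "x \<notin> set (take (Suc i) P)" using xP by (auto dest: in_set_takeD)
  have hP0: "hd (take (Suc i) P) = p" "take (Suc i) P \<noteq> []" using P0 by (auto simp: gpath_walk)
  have P': "gpath E (x # take (Suc i) P) x (P ! i)"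
    using P0 xP0 ep hP0 unfolding gpath_walk walk_Cons by simp
  have Q': "gpath E (take (Suc i) Q) q (P ! i)" using take_path[OF Q(1) i(2)] i(3) by simp
  have "set (x # take (Suc i) P) \<inter> set (take (Suc i) Q) \<subseteq> {P ! i}"
  proof
    fix v assume v: "v \<in> set (x # take (Suc i) P) \<inter> set (take (Suc i) Q)"
    then have v2: "v \<in> set Q" by (auto dest: in_set_takeD)
    then have "v \<noteq> x" using xQ by auto
    then have v1: "v \<in> set (take (Suc i) P)" using v by auto
    obtain k where k: "k \<le> i" "k < length P" "P ! k = v" using set_take_nth[OF v1] by blast
    have "\<not> k < i" using i(4) v2 k(3) by auto
    then have "k = i" using k(1) by simp
    then show "v \<in> {P ! i}" using k by simp
  qed
  moreover have "P ! i \<in> set (x # take (Suc i) P)" by (metis P' gpath_walk last_in_set)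
  moreover have "P ! i \<in> set (take (Suc i) Q)" by (metis Q' gpath_walk last_in_set)
  ultimately have int: "set (x # take (Suc i) P) \<inter> set (take (Suc i) Q) = {P ! i}" by blast
  have "i \<noteq> 0"
  proof
    assume "i = 0"
    then have "p = q" using i P Q by (auto simp: gpath_walk hd_conv_nth)
    then show False using pq by simp
  qed
  then have "4 \<le> length (x # take (Suc i) P) + length (take (Suc i) Q)" using i by simp
  then show False using cycle[OF P' Q' int Esym[OF eq]] by simp
qed

lemma path_depth: "gpath E P x r \<Longrightarrow> x \<in> V \<Longrightarrow> \<forall>k<length P. depth E r (P ! k) + k = depth E r x"
proof (induction P arbitrary: x)
  case Nil
  then show ?case by (simp add: gpath_walk)
next
  case (Cons z P')
  then have zx: "z = x" by (simp add: gpath_walk)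
  show ?case
  proof (cases "P' = []")
    case True
    then show ?thesis using zx by simp
  next
    case False
    define y where "y = hd P'"
    have exy: "E x y" using Cons.prems False zx by (simp add: gpath_walk walk_Cons y_def)
    have yV: "y \<in> V" using EV exy by blast
    have P': "gpath E P' y r" using Cons.prems False by (auto simp: gpath_walk walk_Cons y_def)
    have IH: "\<forall>k<length P'. depth E r (P' ! k) + k = depth E r y" using Cons.IH[OF P' yV] .
    have xnot: "x \<notin> set P'" using Cons.prems zx by (simp add: gpath_walk)
    have dxy: "depth E r x = Suc (depth E r y)"
    proof (rule ccontr)
      assume "depth E r x \<noteq> Suc (depth E r y)"
      then have dy: "depth E r y = Suc (depth E r x)" using adj_depth[OF exy] by simp
      have "length P' \<noteq> 1"
      proof
        assume "length P' = 1"
        then have "y = r" using P' by (cases P') (auto simp: gpath_walk)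
        then show False using dy depth_r by simp
      qed
      then have l2: "1 < length P'" using False by (cases P') auto
      have e1: "E y (P' ! 1)" using P' l2 by (auto simp: gpath_def hd_conv_nth)
      have "depth E r (P' ! 1) + 1 = depth E r y" using IH l2 by blast
      then have "P' ! 1 = x" using unique_lower[OF e1 Esym[OF exy]] dy by simp
      then show False using xnot l2 by (metis nth_mem)
    qed
    show ?thesis
    proof (intro allI impI)
      fix k assume k: "k < length (z # P')"
      show "depth E r ((z # P') ! k) + k = depth E r x"
      proof (cases k)
        case 0 then show ?thesis using zx by simp
      next
        case (Suc j) then show ?thesis using IH k dxy by simp
      qed
    qed
  qed
qed

lemma desc_depth: assumes "descendant V E r x y"
  shows "y \<in> V \<and> x \<in> V \<and> depth E r y \<le> depth E r x \<and> (x \<noteq> y \<longrightarrow> depth E r y < depth E r x)"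
proof -
  obtain P where P: "gpath E P x r" "y \<in> set P" and x: "x \<in> V" using assms by (auto simp: descendant_def)
  then obtain k where k: "k < length P" "P ! k = y" by (auto simp: in_set_conv_nth)
  have d: "depth E r y + k = depth E r x" using path_depth[OF P(1) x] k by blast
  have "x \<noteq> y \<longrightarrow> k \<noteq> 0" using P k by (cases k) (auto simp: gpath_walk hd_conv_nth)
  then show ?thesis using d x path_in_V[OF P(1) x] P(2) by auto
qed

lemma gdist1: assumes "u \<in> V" "w \<in> V" "gdist E u w = 1" shows "E u w"
proof -
  obtain xs where xs: "gpath E xs u w" "length xs = Suc (gdist E u w)" using gdist_path[OF conn[OF assms(1,2)]] by blast
  then have "E (xs ! 0) (xs ! 1)" using assms by (simp add: gpath_def)
  moreover have "xs ! 0 = u" "xs ! 1 = w" using xs assms by (auto simp: gpath_def hd_conv_nth last_conv_nth)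
  ultimately show ?thesis by simp
qed

lemma gdist0: assumes "u \<in> V" "w \<in> V" "gdist E u w = 0" shows "u = w"
proof -
  obtain xs where xs: "gpath E xs u w" "length xs = Suc (gdist E u w)" using gdist_path[OF conn[OF assms(1,2)]] by blast
  then show ?thesis using assms by (cases xs) (auto simp: gpath_def)
qed

lemma child_adj: assumes "child V E r w y" shows "E w y \<and> depth E r w = Suc (depth E r y)"
proof -
  have d: "descendant V E r w y" and g: "gdist E w y = 1" using assms by (auto simp: child_def)
  have D: "y \<in> V" "w \<in> V" "depth E r y \<le> depth E r w" using desc_depth[OF d] by auto
  have e: "E w y" using gdist1[OF D(2) D(1) g] .
  then show ?thesis using adj_depth[OF e] D(3) by auto
qed

lemma mk_grandchild:
  assumes exu: "E x u" and euw: "E u w" and du: "depth E r u = Suc (depth E r w)"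
    and dx: "depth E r x = Suc (depth E r u)"
  shows "grandchild V E r x w"
proof -
  have V: "x \<in> V" "u \<in> V" "w \<in> V" using EV exu euw by auto
  obtain P where P: "gpath E P w r" "length P = Suc (depth E r w)" using dpath V by blast
  have small: "\<And>v. v \<in> set P \<Longrightarrow> depth E r v \<le> depth E r w"
  proof -
    fix v assume "v \<in> set P"
    then obtain k where "k < length P" "P ! k = v" by (auto simp: in_set_conv_nth)
    then show "depth E r v \<le> depth E r w" using sp_depth[OF P V(3)] by force
  qed
  have "x \<notin> set P" "u \<notin> set P" using small du dx by force+
  moreover have "x \<noteq> u" using exu Eirr by auto
  ultimately have "gpath E (x # u # P) x r" using P exu euw
    by (cases P) (auto simp: gpath_walk walk_Cons)
  moreover have "w \<in> set (x # u # P)" using P by (cases P) (auto simp: gpath_walk)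
  ultimately have desc: "descendant V E r x w" using V by (auto simp: descendant_def)
  have "gdist E x w \<le> 2" using gdist_le[of E "[x,u,w]" x w] exu euw by simp
  moreover have "gdist E x w \<noteq> 0"
  proof
    assume "gdist E x w = 0"
    then have "x = w" using gdist0[OF V(1) V(3)] by blast
    then show False using du dx by simp
  qed
  moreover have "gdist E x w \<noteq> 1" using gdist1[OF V(1) V(3)] adj_depth[of x w] du dx by auto
  ultimately have "gdist E x w = 2" by simp
  then show ?thesis using desc by (simp add: grandchild_def)
qed

end


theorem lemma4p3:
  fixes V :: "'a set" and E :: "'a \<Rightarrow> 'a \<Rightarrow> bool" and r :: 'a
    and S A :: "'a set"
  defines "N \<equiv> nbh_set V E A \<inter> N1 V E S"
  defines "S' \<equiv> (S - A) \<union> N"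
  assumes tree: "tree V E" and root: "r \<in> V"
    and dom: "dominating V E S"
    and A: "A \<subseteq> crit1 V E S"
    and same_depth: "\<forall>y\<in>A. \<forall>z\<in>A. depth E r y = depth E r z"
  shows "card S' \<ge> card S
    \<and> (\<forall>x. (\<exists>y\<in>A. descendant V E r x y) \<longrightarrow> dominated_by E S' x)
    \<and> ((dominating V E S' \<and> (\<forall>w\<in>N. \<exists>y\<in>A. child V E r w y)) \<longrightarrow>
           ((\<forall>w\<in>N. \<forall>s\<in>S'. s \<noteq> w \<longrightarrow> \<not> E w s) \<and> N \<subseteq> crit V E S'
            \<and> (\<forall>x\<in>crit V E S. x \<in> S' - crit V E S' \<longrightarrow>
                 (\<exists>w\<in>N. grandchild V E r x w) \<and> (\<forall>p. parent V E r p x \<longrightarrow> p \<notin> S'))))"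
proof -
  interpret rtree V E r using tree root by unfold_locales
  have SV: "S \<subseteq> V" using dom by (simp add: dominating_def)
  have finS: "finite S" using SV finV finite_subset by blast
  have AS: "A \<subseteq> S" using A by (auto simp: crit1_def crit_def)
  have finA: "finite A" using AS finS finite_subset by blast
  have N1S: "N1 V E S \<inter> S = {}" by (auto simp: N1_def)
  have uniq: "s = t" if u: "u \<in> N1 V E S" and st: "s \<in> S" "t \<in> S" "E u s" "E u t" for u s t
  proof -
    have c: "card (cnbh V E u \<inter> S) = 1" using u by (simp add: N1_def)
    have "s \<in> cnbh V E u \<inter> S" "t \<in> cnbh V E u \<inter> S" using st EV by (auto simp: cnbh_def nbh_def)
    then show ?thesis using c by (metis card_1_singletonE singletonD)
  qed
  have NS: "N \<inter> S = {}" using N1S by (auto simp: N_def)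
  have NV: "N \<subseteq> V" by (auto simp: N_def N1_def)
  have finN: "finite N" using NV finV finite_subset by blast
  have NN1: "N \<subseteq> N1 V E S" by (auto simp: N_def)
  have Nadj: "\<exists>a\<in>A. E a w" if "w \<in> N" for w
    using that by (auto simp: N_def nbh_set_def nbh_def)
  have Nuniq: "s \<in> A" if w: "w \<in> N" and s: "s \<in> S" "E w s" for w s
  proof -
    obtain a where a: "a \<in> A" "E a w" using Nadj w by blast
    have "s = a" using uniq[of w s a] w NN1 s a AS Esym[OF a(2)] by blast
    then show ?thesis using a by simp
  qed
  have priv: "\<exists>w\<in>N. E a w" if a: "a \<in> A" for a
  proof -
    have "cnbh V E a \<inter> N1 V E S \<noteq> {}" using A a by (auto simp: crit1_def)
    then obtain w where w: "w \<in> cnbh V E a" "w \<in> N1 V E S" by blast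
    have "w \<noteq> a" using w(2) a AS N1S by blast
    then have "w \<in> nbh V E a" using w(1) by (simp add: cnbh_def)
    then have "E a w" "w \<in> nbh_set V E A" using a by (auto simp: nbh_def nbh_set_def)
    then show ?thesis using w(2) by (auto simp: N_def)
  qed
  have S'_sub: "S' \<subseteq> V" using SV NV by (auto simp: S'_def)
  have part1: "card S' \<ge> card S"
  proof -
    obtain f where f: "\<forall>a\<in>A. f a \<in> N \<and> E a (f a)" using priv by metis
    have "inj_on f A"
    proof (rule inj_onI)
      fix a b assume ab: "a \<in> A" "b \<in> A" "f a = f b"
      have "f a \<in> N1 V E S" using f ab NN1 by blast
      moreover have "E (f a) a" using f ab(1) Esym[of a "f a"] by blast
      moreover have "E (f a) b" using f ab(2,3) Esym[of b "f b"] by simp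
      ultimately show "a = b" using uniq ab AS by blast
    qed
    moreover have "f ` A \<subseteq> N" using f by blast
    ultimately have cAN: "card A \<le> card N" by (rule card_inj_on_le[OF _ _ finN])
    have "card S' = card (S - A) + card N" unfolding S'_def
      using NS finS finN by (intro card_Un_disjoint) auto
    moreover have "card (S - A) = card S - card A" using AS finA by (simp add: card_Diff_subset)
    moreover have "card A \<le> card S" using AS finS card_mono by blast
    ultimately show ?thesis using cAN by simp
  qed
  have part2: "\<forall>x. (\<exists>y\<in>A. descendant V E r x y) \<longrightarrow> dominated_by E S' x"
  proof (intro allI impI)
    fix x assume "\<exists>y\<in>A. descendant V E r x y"
    then obtain y where y: "y \<in> A" "descendant V E r x y" by blast
    have D: "y \<in> V" "x \<in> V" "depth E r y \<le> depth E r x" "x \<noteq> y \<longrightarrow> depth E r y < depth E r x"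
      using desc_depth[OF y(2)] by auto
    show "dominated_by E S' x"
    proof (cases "x = y")
      case True
      then obtain w where "w \<in> N" "E x w" using priv y by blast
      then show ?thesis by (auto simp: dominated_by_def S'_def)
    next
      case False
      then have dlt: "depth E r y < depth E r x" using D by simp
      have xA: "x \<notin> A"
      proof
        assume "x \<in> A"
        then have "depth E r x = depth E r y" using same_depth y(1) by blast
        then show False using dlt by simp
      qed
      show ?thesis
      proof (cases "x \<in> S")
        case True
        then show ?thesis using xA by (simp add: dominated_by_def S'_def)
      next
        case xS: False
        obtain s where s: "s \<in> S" "E x s" using dom D(2) xS by (auto simp: dominating_def dominated_by_def)
        show ?thesis
        proof (cases "s \<in> A")
          case False
          then show ?thesis using s by (auto simp: dominated_by_def S'_def)
        next
          case sA: True
          have "depth E r s = depth E r y" using same_depth y(1) sA by blast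
          then have ds: "depth E r x = Suc (depth E r s)"
            using adj_depth[OF s(2)] dlt by linarith
          show ?thesis
          proof (cases "x \<in> N1 V E S")
            case True
            have "x \<in> nbh_set V E A" using sA Esym[OF s(2)] D(2) by (auto simp: nbh_set_def nbh_def)
            then have "x \<in> N" using True by (simp add: N_def)
            then show ?thesis by (simp add: dominated_by_def S'_def)
          next
            case False
            then have c: "card (cnbh V E x \<inter> S) \<noteq> 1" using D(2) xS by (simp add: N1_def)
            have sin: "s \<in> cnbh V E x \<inter> S" using s EV by (auto simp: cnbh_def nbh_def)
            have fin: "finite (cnbh V E x \<inter> S)" using finS by simp
            have "\<exists>t\<in>cnbh V E x \<inter> S. t \<noteq> s"
            proof (rule ccontr)
              assume "\<not> ?thesis"
              then have "cnbh V E x \<inter> S = {s}" using sin by blast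
              then show False using c by simp
            qed
            then obtain t where t: "t \<in> cnbh V E x \<inter> S" "t \<noteq> s" by blast
            have tx: "t \<noteq> x" using t xS by auto
            then have et: "E x t" using t by (auto simp: cnbh_def nbh_def)
            show ?thesis
            proof (cases "t \<in> A")
              case False
              then show ?thesis using t et by (auto simp: dominated_by_def S'_def)
            next
              case True
              have "depth E r t = depth E r y" using same_depth y(1) True by blast
              then have "depth E r x = Suc (depth E r t)"
                using adj_depth[OF et] dlt by linarith
              then have "t = s" using ds by (intro unique_lower[OF et s(2)]) auto
              then show ?thesis using t(2) by blast
            qed
          qed
        qed
      qed
    qed
  qed
  have part3: "(\<forall>w\<in>N. \<forall>s\<in>S'. s \<noteq> w \<longrightarrow> \<not> E w s) \<and> N \<subseteq> crit V E S'
            \<and> (\<forall>x\<in>crit V E S. x \<in> S' - crit V E S' \<longrightarrow>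
                 (\<exists>w\<in>N. grandchild V E r x w) \<and> (\<forall>p. parent V E r p x \<longrightarrow> p \<notin> S'))"
    if domS': "dominating V E S'" and chN: "\<forall>w\<in>N. \<exists>y\<in>A. child V E r w y"
  proof -
    have Ndepth: "\<exists>y\<in>A. E w y \<and> depth E r w = Suc (depth E r y)" if wN0: "w \<in> N" for w
    proof -
      have "\<exists>y\<in>A. child V E r w y" using chN wN0 by blast
      then obtain y where y: "y \<in> A" "child V E r w y" by blast
      have "E w y \<and> depth E r w = Suc (depth E r y)" by (rule child_adj[OF y(2)])
      then show ?thesis using y(1) by blast
    qed
    have iso: "\<not> E w s" if w: "w \<in> N" and s: "s \<in> S'" "s \<noteq> w" for w s
    proof
      assume e: "E w s"
      show False
      proof (cases "s \<in> N")
        case True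
        obtain y where y: "y \<in> A" "depth E r w = Suc (depth E r y)" using Ndepth[OF w] by blast
        obtain y' where y': "y' \<in> A" "depth E r s = Suc (depth E r y')" using Ndepth[OF True] by blast
        have "depth E r y = depth E r y'" using same_depth y(1) y'(1) by blast
        then have "depth E r w = depth E r s" using y(2) y'(2) by linarith
        then show False using adj_ne[OF e] by simp
      next
        case False
        then have "s \<in> S - A" using s by (simp add: S'_def)
        then show False using Nuniq[OF w _ e] by simp
      qed
    qed
    have c1: "\<forall>w\<in>N. \<forall>s\<in>S'. s \<noteq> w \<longrightarrow> \<not> E w s" using iso by blast
    have c2: "N \<subseteq> crit V E S'"
    proof
      fix w assume w: "w \<in> N"
      have "w \<in> S'" using w by (simp add: S'_def)
      moreover have "\<not> dominated_by E (S' - {w}) w" using iso w by (auto simp: dominated_by_def)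
      then have "\<not> dominating V E (S' - {w})" using w NV by (auto simp: dominating_def)
      ultimately show "w \<in> crit V E S'" by (simp add: crit_def)
    qed
    have c3: "(\<exists>w\<in>N. grandchild V E r x w) \<and> (\<forall>p. parent V E r p x \<longrightarrow> p \<notin> S')"
      if x: "x \<in> crit V E S" "x \<in> S' - crit V E S'" for x
    proof -
      have xS: "x \<in> S" using x by (simp add: crit_def)
      have xA: "x \<notin> A" using x xS NS by (auto simp: S'_def)
      have "dominating V E (S' - {x})" using x by (simp add: crit_def)
      have "\<not> dominating V E (S - {x})" using x by (simp add: crit_def)
      then obtain u where u: "u \<in> V" "\<not> dominated_by E (S - {x}) u" using SV by (auto simp: dominating_def)
      have u2: "dominated_by E (S' - {x}) u" using \<open>dominating V E (S' - {x})\<close> u(1) by (simp add: dominating_def)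
      have uN: "u \<notin> N"
      proof
        assume "u \<in> N"
        then obtain a where a: "a \<in> A" "E a u" using Nadj by blast
        then have "a \<in> S - {x}" using xA AS by auto
        then show False using u(2) Esym[OF a(2)] by (auto simp: dominated_by_def)
      qed
      then have "u \<notin> S' - {x}" using u(2) by (auto simp: S'_def dominated_by_def)
      then obtain w where w: "w \<in> S' - {x}" "E u w" using u2 by (auto simp: dominated_by_def)
      have wN: "w \<in> N" using w u(2) by (auto simp: S'_def dominated_by_def)
      have uS: "u \<notin> S"
      proof
        assume "u \<in> S"
        then have "u = x" using u(2) by (auto simp: dominated_by_def)
        moreover have "x \<in> S'" using x by simp
        ultimately show False using iso[OF wN, of x] w Esym[of u w] by auto
      qed
      obtain t where t: "t \<in> S" "E u t" using dom u(1) uS by (auto simp: dominating_def dominated_by_def)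
      have "t = x" using t u(2) by (auto simp: dominated_by_def)
      then have eux: "E u x" using t by simp
      have uS': "u \<notin> S'" using uS uN by (simp add: S'_def)
      obtain y where y: "y \<in> A" "E w y" "depth E r w = Suc (depth E r y)" using Ndepth[OF wN] by blast
      have "u \<noteq> y" using uS y AS by auto
      have "depth E r w \<noteq> Suc (depth E r u)"
      proof
        assume h: "depth E r w = Suc (depth E r u)"
        have "u = y" using unique_lower[OF Esym[OF w(2)] y(2) h y(3)] .
        then show False using \<open>u \<noteq> y\<close> by simp
      qed
      then have du: "depth E r u = Suc (depth E r w)"
        using adj_depth[OF Esym[OF w(2)]] by blast
      have "x \<noteq> w" using xS wN NS by auto
      have "depth E r u \<noteq> Suc (depth E r x)"
      proof
        assume h: "depth E r u = Suc (depth E r x)"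
        have "x = w" using unique_lower[OF eux w(2) h du] .
        then show False using \<open>x \<noteq> w\<close> by simp
      qed
      then have dx: "depth E r x = Suc (depth E r u)"
        using adj_depth[OF eux] by blast
      have gc: "grandchild V E r x w" using mk_grandchild[OF Esym[OF eux] w(2) du dx] .
      have "p \<notin> S'" if "parent V E r p x" for p
      proof -
        have "child V E r x p" using that by (simp add: parent_def)
        then have xp: "E x p" "depth E r x = Suc (depth E r p)" using child_adj by auto
        have "p = u" using unique_lower[OF xp(1) Esym[OF eux] xp(2) dx] .
        then show ?thesis using uS' by simp
      qed
      then show ?thesis using gc wN by blast
    qed
    show ?thesis using c1 c2 c3 by blast
  qed
  show ?thesis using part1 part2 part3 by blast
qed

end
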